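(* Let $P$ be a poset and $\Delta^\varphi=\{p_0<\dots<p_n\}$ a nondegenerate simplex of $N(P)$. The inclusion $\|\Delta^\varphi\|_P\hookrightarrow\varphi_P^{-1}(\{p_0,\dots,p_n\})$ is a filtered homotopy equivalence.
   Context: $\varphi_P:\|N(P)\|\to P$ sends a point $(\{q_0<\dots<q_m\},t)$, $t$ in the interior of $\Delta^m$, to $q_m$. $\|\Delta^\varphi\|_P$ is the realization of the simplex $\{p_0<\dots<p_n\}$ as a subspace of $\|N(P)\|$, and both it and $\varphi_P^{-1}(\{p_0,\dots,p_n\})\subseteq\|N(P)\|$ are filtered over $P$ by the restriction of $\varphi_P$. A filtered homotopy equivalence is a map $f$ commuting with the maps to $P$ admitting a filtered map $g$ in the other direction such that $f\circ g$ and $g\circ f$ are homotopic to the identities through homotopies $H:A\times[0,1]\to B$ commuting with the maps to $P$ (with $A\times[0,1]$ filtered via the projection to $A$). *)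

theory Defs
  imports "HOL-Analysis.Analysis"
begin

text \<open>The poset P is the universe of a type of class order.
  Points of the realization of the nerve N(P) are barycentric coordinate
  functions t : P \<Rightarrow> real: nonnegative, finitely supported, summing to 1,
  whose support is a chain (the support is the nondegenerate simplex in
  whose interior the point lies).\<close>

definition is_chain :: "'a::order set \<Rightarrow> bool" where
  "is_chain S \<longleftrightarrow> (\<forall>x\<in>S. \<forall>y\<in>S. x \<le> y \<or> y \<le> x)"

definition supp :: "('a \<Rightarrow> real) \<Rightarrow> 'a set" where
  "supp t = {x. t x \<noteq> 0}"

definition nerve_points :: "('a::order \<Rightarrow> real) set" where
  "nerve_points = {t. finite (supp t) \<and> (\<forall>x. 0 \<le> t x)
                     \<and> sum t (supp t) = 1 \<and> is_chain (supp t)}"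

definition closed_simplex :: "'a::order set \<Rightarrow> ('a \<Rightarrow> real) set" where
  "closed_simplex S = {t \<in> nerve_points. supp t \<subseteq> S}"

text \<open>Realization ||N(P)||, carrying the coherent (weak) topology with
  respect to its closed simplices, each topologized as a subspace of
  the (finite-dimensional) coordinate space.\<close>
definition nerve_realization :: "('a::order \<Rightarrow> real) topology" where
  "nerve_realization = topology (\<lambda>U. U \<subseteq> nerve_points \<and>
     (\<forall>S. finite S \<and> S \<noteq> {} \<and> is_chain S \<longrightarrow>
        openin (subtopology (product_topology (\<lambda>_. euclideanreal) UNIV)
                 (closed_simplex S)) (U \<inter> closed_simplex S)))"

definition phiP :: "('a::order \<Rightarrow> real) \<Rightarrow> 'a" where
  "phiP t = (THE q. q \<in> supp t \<and> (\<forall>x\<in>supp t. x \<le> q))"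

definition filtered_homotopy_equivalence ::
  "'x topology \<Rightarrow> ('x \<Rightarrow> 'p) \<Rightarrow> 'y topology \<Rightarrow> ('y \<Rightarrow> 'p) \<Rightarrow> ('x \<Rightarrow> 'y) \<Rightarrow> bool" where
  "filtered_homotopy_equivalence X phiX Y phiY f \<longleftrightarrow>
     continuous_map X Y f \<and> (\<forall>x\<in>topspace X. phiY (f x) = phiX x) \<and>
     (\<exists>g. continuous_map Y X g \<and> (\<forall>y\<in>topspace Y. phiX (g y) = phiY y) \<and>
        homotopic_with (\<lambda>h. \<forall>x\<in>topspace X. phiX (h x) = phiX x) X X (g \<circ> f) id \<and>
        homotopic_with (\<lambda>h. \<forall>y\<in>topspace Y. phiY (h y) = phiY y) Y Y (f \<circ> g) id)"

end

theory Submission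
  imports Defs
begin

abbreviation PT :: "('a \<Rightarrow> real) topology" where
  "PT \<equiv> product_topology (\<lambda>_. euclideanreal) UNIV"

lemma istop_gen:
  "istopology (\<lambda>U. U \<subseteq> M \<and> (\<forall>S. Q S \<longrightarrow> openin (X S) (U \<inter> C S)))"
proof -
  have 1: "\<forall>U V. (U \<subseteq> M \<and> (\<forall>S. Q S \<longrightarrow> openin (X S) (U \<inter> C S))) \<longrightarrow>
      (V \<subseteq> M \<and> (\<forall>S. Q S \<longrightarrow> openin (X S) (V \<inter> C S))) \<longrightarrow>
      (U \<inter> V \<subseteq> M \<and> (\<forall>S. Q S \<longrightarrow> openin (X S) (U \<inter> V \<inter> C S)))"
  proof (intro allI impI conjI)
    fix U V S
    assume U: "U \<subseteq> M \<and> (\<forall>S. Q S \<longrightarrow> openin (X S) (U \<inter> C S))"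
      and V: "V \<subseteq> M \<and> (\<forall>S. Q S \<longrightarrow> openin (X S) (V \<inter> C S))" and "Q S"
    have "U \<inter> V \<inter> C S = (U \<inter> C S) \<inter> (V \<inter> C S)" by blast
    then show "openin (X S) (U \<inter> V \<inter> C S)" using U V \<open>Q S\<close> by (metis openin_Int)
  qed blast
  have 2: "\<forall>K. (\<forall>U\<in>K. U \<subseteq> M \<and> (\<forall>S. Q S \<longrightarrow> openin (X S) (U \<inter> C S))) \<longrightarrow>
      (\<Union>K \<subseteq> M \<and> (\<forall>S. Q S \<longrightarrow> openin (X S) (\<Union>K \<inter> C S)))"
  proof (intro allI impI conjI)
    fix K S
    assume K: "\<forall>U\<in>K. U \<subseteq> M \<and> (\<forall>S. Q S \<longrightarrow> openin (X S) (U \<inter> C S))" and "Q S"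
    have "\<Union>K \<inter> C S = \<Union>((\<lambda>U. U \<inter> C S) ` K)" by blast
    moreover have "openin (X S) (\<Union>((\<lambda>U. U \<inter> C S) ` K))"
      using K \<open>Q S\<close> by (intro openin_Union) blast
    ultimately show "openin (X S) (\<Union>K \<inter> C S)" by simp
  qed blast
  show ?thesis unfolding istopology_def using 1 2 by blast
qed

lemma istop_NR:
  "istopology (\<lambda>U. U \<subseteq> nerve_points \<and>
     (\<forall>S. finite S \<and> S \<noteq> {} \<and> is_chain S \<longrightarrow>
        openin (subtopology (product_topology (\<lambda>_. euclideanreal) UNIV)
                 (closed_simplex S)) (U \<inter> closed_simplex S)))"
  by (rule istop_gen)

lemma openin_NR:
  "openin nerve_realization U \<longleftrightarrow> U \<subseteq> nerve_points \<and>
     (\<forall>S. finite S \<and> S \<noteq> {} \<and> is_chain S \<longrightarrow>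
        openin (subtopology PT (closed_simplex S)) (U \<inter> closed_simplex S))"
  unfolding nerve_realization_def by (subst topology_inverse'[OF istop_NR]) (rule refl)

lemma topspace_NR: "topspace nerve_realization = nerve_points"
proof
  show "topspace nerve_realization \<subseteq> nerve_points"
    unfolding topspace_def using openin_NR by blast
  have "openin nerve_realization nerve_points"
    unfolding openin_NR
  proof (intro conjI allI impI)
    fix S
    have "nerve_points \<inter> closed_simplex S = topspace (subtopology PT (closed_simplex S))"
      by (auto simp: closed_simplex_def)
    then show "openin (subtopology PT (closed_simplex S)) (nerve_points \<inter> closed_simplex S)"
      using openin_topspace by metis
  qed simp
  then show "nerve_points \<subseteq> topspace nerve_realization" by (rule openin_subset)
qed

lemma supp_ne: "t \<in> nerve_points \<Longrightarrow> supp t \<noteq> {}"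
  unfolding nerve_points_def by auto

lemma max_exists:
  assumes "t \<in> nerve_points"
  shows "\<exists>q\<in>supp t. \<forall>x\<in>supp t. x \<le> q"
proof -
  have f: "finite (supp t)" and c: "is_chain (supp t)" using assms unfolding nerve_points_def by auto
  obtain m where m: "m \<in> supp t" "\<forall>b\<in>supp t. m \<le> b \<longrightarrow> m = b"
    using finite_has_maximal[OF f supp_ne[OF assms]] by blast
  have "\<forall>x\<in>supp t. x \<le> m"
    using m c unfolding is_chain_def by (metis order.eq_iff)
  with m show ?thesis by blast
qed

lemma phiP_eq:
  assumes "q \<in> supp u" "\<forall>x\<in>supp u. x \<le> q"
  shows "phiP u = q"
  unfolding phiP_def
  by (rule the_equality) (use assms in \<open>auto intro: order.antisym\<close>)

lemma phiP_prop:
  assumes "t \<in> nerve_points"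
  shows "phiP t \<in> supp t" "\<forall>x\<in>supp t. x \<le> phiP t"
  using max_exists[OF assms] phiP_eq by metis+

definition HK :: "'a set \<Rightarrow> real \<times> ('a \<Rightarrow> real) \<Rightarrow> ('a \<Rightarrow> real)" where
  "HK S = (\<lambda>(s,t) x. s * t x + (1 - s) * (if x \<in> S then t x / sum t S else 0))"

definition AS :: "'a::order set \<Rightarrow> ('a \<Rightarrow> real) set" where
  "AS S = {t \<in> nerve_points. sum t S > 0}"

lemma HK_apply: "HK S (s,t) x = s * t x + (1 - s) * (if x \<in> S then t x / sum t S else 0)"
  by (simp add: HK_def)

lemma HK_1: "HK S (1,t) = t"
  by (rule ext) (simp add: HK_apply)

lemma cont_coord: "continuous_map (subtopology PT B) euclideanreal (\<lambda>t. t x)"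
  by (rule continuous_map_from_subtopology)
     (use continuous_map_product_projection[of x UNIV "\<lambda>_. euclideanreal"] in simp)

lemma AS_open:
  assumes "finite S"
  shows "openin nerve_realization (AS S)"
  unfolding openin_NR
proof (intro conjI allI impI)
  show "AS S \<subseteq> nerve_points" by (auto simp: AS_def)
  fix T
  have c: "continuous_map (subtopology PT (closed_simplex T)) euclideanreal (\<lambda>t. sum t S)"
    using assms by (intro continuous_map_sum cont_coord)
  have "openin (subtopology PT (closed_simplex T))
     {t \<in> topspace (subtopology PT (closed_simplex T)). sum t S \<in> {0<..}}"
    by (rule openin_continuous_map_preimage[OF c]) simp
  moreover have "{t \<in> topspace (subtopology PT (closed_simplex T)). sum t S \<in> {0<..}} = AS S \<inter> closed_simplex T"
    by (auto simp: AS_def closed_simplex_def)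
  ultimately show "openin (subtopology PT (closed_simplex T)) (AS S \<inter> closed_simplex T)" by simp
qed

lemma supp_HK: "supp (HK S (s,t)) \<subseteq> supp t"
  by (auto simp: supp_def HK_apply)

lemma sum_supp_eq:
  assumes "finite (supp t)" "supp t \<subseteq> B" "finite B"
  shows "sum t B = sum t (supp t)"
  using assms by (intro sum.mono_neutral_right) (auto simp: supp_def)

lemma HK_mem:
  assumes S: "finite S" and t: "t \<in> AS S" and s: "s \<in> {0..1}"
  shows "HK S (s,t) \<in> AS S"
proof -
  let ?c = "sum t S"
  have tn: "t \<in> nerve_points" and c: "?c > 0" using t by (auto simp: AS_def)
  have fs: "finite (supp t)" and nn: "\<And>x. 0 \<le> t x" and s1: "sum t (supp t) = 1"
    and ch: "is_chain (supp t)" using tn by (auto simp: nerve_points_def)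
  have s0: "0 \<le> s" "s \<le> 1" using s by auto
  let ?h = "HK S (s,t)"
  have nnh: "0 \<le> ?h x" for x
    using nn[of x] s0 c by (simp add: HK_apply)
  have fsh: "finite (supp ?h)" by (rule finite_subset[OF supp_HK fs])
  have chh: "is_chain (supp ?h)" using supp_HK[of S s t] ch unfolding is_chain_def by blast
  have eq1: "sum ?h (supp ?h) = sum ?h (supp t)"
    using fs supp_HK[of S s t] by (intro sum.mono_neutral_left) (auto simp: supp_def)
  have eqc: "?c = sum t (S \<inter> supp t)"
    using S by (intro sum.mono_neutral_right) (auto simp: supp_def)
  have g1: "sum (\<lambda>x. if x \<in> S then t x / ?c else 0) (supp t) = 1"
  proof -
    have "sum (\<lambda>x. if x \<in> S then t x / ?c else 0) (supp t) = sum (\<lambda>x. t x / ?c) (supp t \<inter> S)"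
      using fs by (simp add: sum.If_cases Int_commute)
    also have "\<dots> = sum t (S \<inter> supp t) / ?c" by (simp add: sum_divide_distrib Int_commute)
    also have "\<dots> = 1" using eqc c by simp
    finally show ?thesis .
  qed
  have "sum ?h (supp t) = s * sum t (supp t) + (1 - s) * sum (\<lambda>x. if x \<in> S then t x / ?c else 0) (supp t)"
    by (simp add: HK_apply sum.distrib sum_distrib_left)
  also have "\<dots> = 1" using s1 g1 by simp
  finally have sh: "sum ?h (supp ?h) = 1" using eq1 by simp
  have "sum ?h S = s * ?c + (1 - s) * sum (\<lambda>x. t x / ?c) S"
    by (simp add: HK_apply sum.distrib sum_distrib_left)
  also have "\<dots> = s * ?c + (1 - s)"
  proof -
    have "sum (\<lambda>x. t x / ?c) S = ?c / ?c" by (rule sum_divide_distrib[symmetric])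
    then show ?thesis using c by simp
  qed
  finally have "sum ?h S > 0"
    using c s0 by (cases "s = 0") (auto intro: add_pos_nonneg)
  then show ?thesis using nnh fsh chh sh by (simp add: AS_def nerve_points_def)
qed

lemma HK_cs:
  assumes "t \<in> closed_simplex T" "HK S (s,t) \<in> nerve_points"
  shows "HK S (s,t) \<in> closed_simplex T"
  using assms supp_HK[of S s t] by (auto simp: closed_simplex_def)

lemma HK_phi:
  assumes S: "finite S" and t: "t \<in> AS S" and s: "s \<in> {0..1}" and q: "phiP t \<in> S"
  shows "phiP (HK S (s,t)) = phiP t"
proof (rule phiP_eq)
  have tn: "t \<in> nerve_points" and c: "sum t S > 0" using t by (auto simp: AS_def)
  have nn: "\<And>x. 0 \<le> t x" using tn by (auto simp: nerve_points_def)
  have "t (phiP t) \<noteq> 0" using phiP_prop[OF tn] by (simp add: supp_def)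
  then have tp: "t (phiP t) > 0" using nn[of "phiP t"] by simp
  have "HK S (s,t) (phiP t) > 0"
    using s tp c q by (cases "s = 0") (auto simp: HK_apply intro: add_pos_nonneg)
  then show "phiP t \<in> supp (HK S (s,t))" by (simp add: supp_def)
  show "\<forall>x\<in>supp (HK S (s, t)). x \<le> phiP t" using supp_HK[of S s t] phiP_prop[OF tn] by blast
qed

lemma HK_0_cs:
  assumes S: "finite S" and t: "t \<in> AS S"
  shows "HK S (0,t) \<in> closed_simplex S"
  using HK_mem[OF assms, of 0] by (auto simp: AS_def closed_simplex_def supp_def HK_apply)

lemma HK_0_id:
  assumes S: "finite S" and t: "t \<in> closed_simplex S"
  shows "HK S (0,t) = t"
proof -
  have tn: "t \<in> nerve_points" and sub: "supp t \<subseteq> S" using t by (auto simp: closed_simplex_def)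
  have "sum t S = sum t (supp t)" using tn sub S by (intro sum_supp_eq) (auto simp: nerve_points_def)
  also have "\<dots> = 1" using tn by (auto simp: nerve_points_def)
  finally have "sum t S = 1" .
  then show ?thesis using sub by (auto simp: HK_apply supp_def fun_eq_iff)
qed

lemma HK_cont_PT:
  assumes S: "finite S"
  shows "continuous_map (prod_topology (top_of_set {0..1}) (subtopology PT (AS S))) PT (HK S)"
  unfolding continuous_map_componentwise_UNIV
proof
  fix x
  let ?Z = "prod_topology (top_of_set {0..1::real}) (subtopology PT (AS S))"
  have cs: "continuous_map ?Z euclideanreal (\<lambda>z. snd z y)" for y
    by (rule continuous_map_compose[OF continuous_map_snd cont_coord, unfolded o_def])
  have cf: "continuous_map ?Z euclideanreal fst"
    by (metis continuous_map_fst continuous_map_into_fulltopology)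
  have cc: "continuous_map ?Z euclideanreal (\<lambda>z. sum (snd z) S)"
    using S cs by (intro continuous_map_sum) auto
  have nz: "z \<in> topspace ?Z \<Longrightarrow> sum (snd z) S \<noteq> 0" for z
    by (auto simp: AS_def)
  have "continuous_map ?Z euclideanreal
     (\<lambda>z. fst z * snd z x + (1 - fst z) * (if x \<in> S then snd z x / sum (snd z) S else 0))"
  proof (cases "x \<in> S")
    case True
    then show ?thesis using cs cf cc nz S
      by (simp, intro continuous_intros continuous_map_real_divide) auto
  next
    case False
    then show ?thesis using cs cf by (simp, intro continuous_intros) auto
  qed
  moreover have "(\<lambda>z. HK S z x) = (\<lambda>z. fst z * snd z x + (1 - fst z) * (if x \<in> S then snd z x / sum (snd z) S else 0))"
    by (auto simp: HK_def)
  ultimately show "continuous_map ?Z euclideanreal (\<lambda>z. HK S z x)" by simp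
qed

lemma HK_cont_T:
  assumes S: "finite S"
  shows "continuous_map (prod_topology (top_of_set {0..1}) (subtopology PT (closed_simplex T \<inter> AS S)))
           (subtopology PT (closed_simplex T)) (HK S)"
proof -
  have e1: "subtopology PT (closed_simplex T \<inter> AS S) = subtopology (subtopology PT (AS S)) (closed_simplex T)"
    by (simp add: subtopology_subtopology Int_commute)
  have e: "prod_topology (top_of_set {0..1::real}) (subtopology PT (closed_simplex T \<inter> AS S))
     = subtopology (prod_topology (top_of_set {0..1}) (subtopology PT (AS S))) ({0..1} \<times> closed_simplex T)"
    unfolding e1 prod_topology_subtopology(2) by simp
  have c: "continuous_map (prod_topology (top_of_set {0..1::real}) (subtopology PT (closed_simplex T \<inter> AS S))) PT (HK S)"
    unfolding e by (rule continuous_map_from_subtopology[OF HK_cont_PT[OF S]])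
  have "HK S z \<in> closed_simplex T" if "z \<in> {0..1} \<times> (closed_simplex T \<inter> AS S)" for z
  proof -
    obtain a b where z0: "z = (a,b)" using prod.exhaust by blast
    then have z: "z = (a,b)" "a \<in> {0..1}" "b \<in> closed_simplex T" "b \<in> AS S" using that by auto
    have "HK S (a,b) \<in> nerve_points" using HK_mem[OF S z(4) z(2)] by (simp add: AS_def)
    then show ?thesis using HK_cs[OF z(3)] z(1) by simp
  qed
  then show ?thesis using c by (auto simp: continuous_map_in_subtopology)
qed

lemma HK_cont_NR:
  assumes S: "finite S"
  shows "continuous_map (prod_topology (top_of_set {0..1}) (subtopology nerve_realization (AS S)))
           (subtopology nerve_realization (AS S)) (HK S)"
  unfolding continuous_map
proof (intro conjI allI impI)
  let ?A = "AS S"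
  let ?Z = "prod_topology (top_of_set {0..1::real}) (subtopology nerve_realization ?A)"
  have Aopen: "openin nerve_realization ?A" using AS_open[OF S] .
  have AN: "?A \<subseteq> nerve_points" by (auto simp: AS_def)
  have tZ: "topspace ?Z = {0..1} \<times> ?A" using AN by (simp add: topspace_NR Int_absorb1)
  show "HK S ` topspace ?Z \<subseteq> topspace (subtopology nerve_realization ?A)"
    using tZ AN HK_mem[OF S] by (auto simp: topspace_NR)
  fix W assume W0: "openin (subtopology nerve_realization ?A) W"
  then have W: "openin nerve_realization W" and WA: "W \<subseteq> ?A"
    using openin_open_subtopology[OF Aopen] by auto
  have WT: "openin (subtopology PT (closed_simplex T)) (W \<inter> closed_simplex T)"
    if "finite T" "T \<noteq> {}" "is_chain T" for T
    using W that unfolding openin_NR by blast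
  have AT: "openin (subtopology PT (closed_simplex T)) (?A \<inter> closed_simplex T)"
    if "finite T" "T \<noteq> {}" "is_chain T" for T
    using Aopen that unfolding openin_NR by blast
  define QT where "QT = (\<lambda>T. {z \<in> topspace (prod_topology (top_of_set {0..1::real}) (subtopology PT (closed_simplex T \<inter> ?A))).
      HK S z \<in> W \<inter> closed_simplex T})"
  have QTo: "openin (prod_topology (top_of_set {0..1}) (subtopology PT (closed_simplex T \<inter> ?A))) (QT T)"
    if "finite T" "T \<noteq> {}" "is_chain T" for T
    unfolding QT_def by (rule openin_continuous_map_preimage[OF HK_cont_T[OF S] WT[OF that]])
  have tQT: "topspace (prod_topology (top_of_set {0..1::real}) (subtopology PT (closed_simplex T \<inter> ?A)))
      = {0..1} \<times> (closed_simplex T \<inter> ?A)" for T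
    by simp
  show "openin ?Z {x \<in> topspace ?Z. HK S x \<in> W}"
    unfolding openin_prod_topology_alt
  proof (intro allI impI)
    fix s0 t0 assume st: "(s0, t0) \<in> {x \<in> topspace ?Z. HK S x \<in> W}"
    then have s0: "s0 \<in> {0..1}" and t0: "t0 \<in> ?A" and hW: "HK S (s0,t0) \<in> W" using tZ by auto
    let ?T0 = "supp t0"
    have T0: "finite ?T0" "?T0 \<noteq> {}" "is_chain ?T0" using t0 AN supp_ne by (auto simp: nerve_points_def)
    have t0T: "t0 \<in> closed_simplex ?T0" using t0 AN by (auto simp: closed_simplex_def)
    have "HK S (s0,t0) \<in> closed_simplex ?T0"
      using HK_cs[OF t0T] HK_mem[OF S t0 s0] AN by auto
    then have "(s0,t0) \<in> QT ?T0" unfolding QT_def tQT using s0 t0 t0T hW by auto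
    then obtain O0 U0 where O0: "openin (top_of_set {0..1}) O0" "s0 \<in> O0"
      and U0: "t0 \<in> U0" "O0 \<times> U0 \<subseteq> QT ?T0"
      using QTo[OF T0] unfolding openin_prod_topology_alt by blast
    obtain e where e: "e > 0" "cball s0 e \<inter> {0..1} \<subseteq> O0"
      using O0 unfolding openin_contains_cball by metis
    define J where "J = cball s0 e \<inter> {0..1::real}"
    define U where "U = {t \<in> ?A. \<forall>s\<in>J. HK S (s,t) \<in> W}"
    have J01: "J \<subseteq> {0..1}" by (auto simp: J_def)
    have Jc: "compactin (top_of_set {0..1}) J"
      unfolding compactin_subtopology using J01 by (auto simp: J_def intro: compact_Int_closed)
    show "\<exists>U' V. openin (top_of_set {0..1}) U' \<and> openin (subtopology nerve_realization ?A) V \<and>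
         s0 \<in> U' \<and> t0 \<in> V \<and> U' \<times> V \<subseteq> {x \<in> topspace ?Z. HK S x \<in> W}"
    proof (intro exI conjI)
      show "openin (top_of_set {0..1}) ({0..1} \<inter> ball s0 e)" by (rule openin_open_Int) simp
      show "s0 \<in> {0..1} \<inter> ball s0 e" using s0 e by simp
      show "t0 \<in> U"
        unfolding U_def
      proof (intro CollectI conjI ballI)
        fix s assume "s \<in> J"
        then have "(s,t0) \<in> QT ?T0" using U0 e unfolding J_def by blast
        then show "HK S (s,t0) \<in> W" unfolding QT_def by blast
      qed (rule t0)
      show "({0..1} \<inter> ball s0 e) \<times> U \<subseteq> {x \<in> topspace ?Z. HK S x \<in> W}"
        using tZ by (auto simp: U_def J_def)
      show "openin (subtopology nerve_realization ?A) U"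
        unfolding openin_open_subtopology[OF Aopen]
      proof
        show "U \<subseteq> ?A" by (auto simp: U_def)
        show "openin nerve_realization U" unfolding openin_NR
        proof (intro conjI allI impI)
          show "U \<subseteq> nerve_points" using AN by (auto simp: U_def)
          fix T :: "'a set" assume T: "finite T \<and> T \<noteq> {} \<and> is_chain T"
          let ?Y = "subtopology PT (closed_simplex T \<inter> ?A)"
          define R where "R = {t \<in> closed_simplex T \<inter> ?A. J \<times> {t} \<subseteq> QT T}"
          have "openin ?Y R" unfolding openin_subopen[of ?Y R]
          proof
            fix t assume t: "t \<in> R"
            have "\<exists>U V. openin (top_of_set {0..1}) U \<and> openin ?Y V \<and> J \<subseteq> U \<and> t \<in> V \<and> U \<times> V \<subseteq> QT T"
              by (rule tube_lemma_left) (use QTo T Jc t in \<open>auto simp: R_def\<close>)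
            then obtain V where V: "openin ?Y V" "t \<in> V" "J \<times> V \<subseteq> QT T" by blast
            have "V \<subseteq> closed_simplex T \<inter> ?A" using openin_subset[OF V(1)] by simp
            then have "V \<subseteq> R" using V(3) unfolding R_def by blast
            then show "\<exists>V. openin ?Y V \<and> t \<in> V \<and> V \<subseteq> R" using V by blast
          qed
          moreover have "R = U \<inter> closed_simplex T"
          proof
            show "R \<subseteq> U \<inter> closed_simplex T"
              unfolding R_def U_def QT_def by blast
            show "U \<inter> closed_simplex T \<subseteq> R"
            proof
              fix t assume t: "t \<in> U \<inter> closed_simplex T"
              then have tA: "t \<in> ?A" and tT: "t \<in> closed_simplex T" by (auto simp: U_def)
              have "(s,t) \<in> QT T" if "s \<in> J" for s
              proof -
                have s01: "s \<in> {0..1}" using that J01 by blast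
                have "HK S (s,t) \<in> closed_simplex T"
                  using HK_cs[OF tT] HK_mem[OF S tA s01] AN by auto
                then show ?thesis unfolding QT_def tQT using t that s01 tA tT by (auto simp: U_def)
              qed
              then show "t \<in> R" unfolding R_def using tA tT by blast
            qed
          qed
          ultimately have R: "openin ?Y (U \<inter> closed_simplex T)" by simp
          have "?Y = subtopology (subtopology PT (closed_simplex T)) (?A \<inter> closed_simplex T)"
            unfolding subtopology_subtopology by (rule arg_cong[where f="subtopology PT"]) blast
          then show "openin (subtopology PT (closed_simplex T)) (U \<inter> closed_simplex T)"
            using R openin_open_subtopology[OF AT] T by auto
        qed
      qed
    qed
  qed
qed

theorem lemma2p17:
  fixes S :: "'a::order set"
  assumes "finite S" and "S \<noteq> {}" and "is_chain S"
  shows "filtered_homotopy_equivalence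
           (subtopology nerve_realization (closed_simplex S)) phiP
           (subtopology nerve_realization {t \<in> nerve_points. phiP t \<in> S}) phiP
           id"
proof -
  note fS = assms(1)
  define Y where "Y = {t \<in> nerve_points. phiP t \<in> S}"
  define X where "X = closed_simplex S"
  define NR where "NR = (nerve_realization :: ('a \<Rightarrow> real) topology)"
  define g where "g = (\<lambda>t. HK S (0::real, t))"
  have AN: "AS S \<subseteq> nerve_points" by (auto simp: AS_def)
  have YA: "Y \<subseteq> AS S"
  proof
    fix t assume t: "t \<in> Y"
    then have tn: "t \<in> nerve_points" and q: "phiP t \<in> S" by (auto simp: Y_def)
    have nn: "\<And>x. 0 \<le> t x" using tn by (auto simp: nerve_points_def)
    have "t (phiP t) \<noteq> 0" using phiP_prop[OF tn] by (simp add: supp_def)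
    then have "t (phiP t) > 0" using nn[of "phiP t"] by simp
    also have "t (phiP t) \<le> sum t S" using fS q nn by (intro member_le_sum) auto
    finally show "t \<in> AS S" using tn by (simp add: AS_def)
  qed
  have XY: "X \<subseteq> Y"
    using phiP_prop by (fastforce simp: X_def Y_def closed_simplex_def)
  have tY: "topspace (subtopology NR Y) = Y" using YA AN by (auto simp: NR_def topspace_NR)
  have tX: "topspace (subtopology NR X) = X" using XY YA AN by (auto simp: NR_def topspace_NR)
  have phiK: "phiP (HK S (s,t)) = phiP t" if "s \<in> {0..1}" "t \<in> Y" for s t
    using HK_phi[OF fS] that YA by (auto simp: Y_def)
  have KY: "HK S (s,t) \<in> Y" if "s \<in> {0..1}" "t \<in> Y" for s t
    using HK_mem[OF fS, of t s] phiK[OF that] that YA AN by (auto simp: Y_def)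
  have contK: "continuous_map (prod_topology (top_of_set {0..1}) (subtopology NR Y)) (subtopology NR Y) (HK S)"
  proof -
    have e: "prod_topology (top_of_set {0..1::real}) (subtopology NR Y)
        = subtopology (prod_topology (top_of_set {0..1}) (subtopology NR (AS S))) ({0..1} \<times> Y)"
    proof -
      have "subtopology NR Y = subtopology (subtopology NR (AS S)) Y"
        using YA by (simp add: subtopology_subtopology Int_absorb1)
      then show ?thesis by (simp add: prod_topology_subtopology(2))
    qed
    have c1: "continuous_map (prod_topology (top_of_set {0..1::real}) (subtopology NR Y)) (subtopology NR (AS S)) (HK S)"
    proof -
      have "continuous_map (subtopology (prod_topology (top_of_set {0..1::real}) (subtopology NR (AS S))) ({0..1} \<times> Y))
          (subtopology NR (AS S)) (HK S)"
        unfolding NR_def by (rule continuous_map_from_subtopology[OF HK_cont_NR[OF fS]])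
      then show ?thesis using e by simp
    qed
    have "subtopology NR Y = subtopology (subtopology NR (AS S)) Y"
      using YA by (simp add: subtopology_subtopology Int_absorb1)
    then show ?thesis using c1 KY tY by (auto simp: continuous_map_in_subtopology)
  qed
  have contg: "continuous_map (subtopology NR Y) (subtopology NR Y) g"
  proof -
    have "continuous_map (subtopology NR Y) (prod_topology (top_of_set {0..1::real}) (subtopology NR Y)) (\<lambda>t. (0, t))"
      by (intro continuous_map_pairedI) (simp_all add: continuous_map_const continuous_map_id[unfolded id_def])
    from continuous_map_compose[OF this contK] show ?thesis by (simp add: g_def o_def)
  qed
  have gX: "g t \<in> X" if "t \<in> Y" for t
    using HK_0_cs[OF fS] that YA by (auto simp: g_def X_def)
  have contg': "continuous_map (subtopology NR Y) (subtopology NR X) g"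
  proof -
    have "subtopology NR X = subtopology (subtopology NR Y) X"
      using XY by (simp add: subtopology_subtopology Int_absorb1)
    then show ?thesis using contg gX tY by (auto simp: continuous_map_in_subtopology)
  qed
  have gid: "g t = t" if "t \<in> X" for t
    using HK_0_id[OF fS] that by (simp add: g_def X_def)
  have contid: "continuous_map (subtopology NR X) (subtopology NR Y) id"
    using XY tX by (auto simp: continuous_map_in_subtopology intro: continuous_map_from_subtopology)
  have "filtered_homotopy_equivalence (subtopology NR X) phiP (subtopology NR Y) phiP id"
    unfolding filtered_homotopy_equivalence_def
  proof (intro conjI exI ballI)
    show "continuous_map (subtopology NR X) (subtopology NR Y) id" by (rule contid)
    show "phiP (id x) = phiP x" for x by simp
    show "continuous_map (subtopology NR Y) (subtopology NR X) g" by (rule contg')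
    show "phiP (g y) = phiP y" if "y \<in> topspace (subtopology NR Y)" for y
      using phiK[of 0 y] that tY by (simp add: g_def)
    show "homotopic_with (\<lambda>h. \<forall>x\<in>topspace (subtopology NR X). phiP (h x) = phiP x)
        (subtopology NR X) (subtopology NR X) (g \<circ> id) id"
    proof (rule homotopic_with_equal)
      show "\<forall>x\<in>topspace (subtopology NR X). phiP ((g \<circ> id) x) = phiP x" using gid tX by simp
      show "\<forall>x\<in>topspace (subtopology NR X). phiP (id x) = phiP x" by simp
      show "continuous_map (subtopology NR X) (subtopology NR X) (g \<circ> id)"
        by (rule continuous_map_eq[OF continuous_map_id]) (use gid tX in simp)
      show "(g \<circ> id) x = id x" if "x \<in> topspace (subtopology NR X)" for x using gid tX that by simp
    qed
    show "homotopic_with (\<lambda>h. \<forall>y\<in>topspace (subtopology NR Y). phiP (h y) = phiP y)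
        (subtopology NR Y) (subtopology NR Y) (id \<circ> g) id"
      unfolding homotopic_with_def
    proof (intro exI conjI allI ballI)
      show "continuous_map (prod_topology (top_of_set {0..1}) (subtopology NR Y)) (subtopology NR Y) (HK S)"
        by (rule contK)
      show "HK S (0, x) = (id \<circ> g) x" for x by (simp add: g_def)
      show "HK S (1, x) = id x" for x by (simp add: HK_1)
      show "phiP (HK S (s, y)) = phiP y" if "s \<in> {0..1}" "y \<in> topspace (subtopology NR Y)" for s y
        using phiK that tY by simp
    qed
  qed
  then show ?thesis by (simp add: NR_def X_def Y_def)
qed

end
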